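(* Let $0<R\le\infty$ and let $\varphi$ be a quasiconcave function on $[0,R)$. Then: (i) $S_\varphi$ is bounded from $M_\varphi(0,R)$ to $M_\varphi(0,R)$ if and only if $\varphi$ satisfies the $B$-condition; (ii) $S_\varphi$ is bounded from $L^\infty(0,R)$ to $L^\infty(0,R)$ for every quasiconcave $\varphi$.
   Context: For a measurable a.e. finite function $f$ on $(0,R)$, $f^*$ is its non-increasing rearrangement, $f^*(t)=\inf\{\lambda>0: |\{x:|f(x)|>\lambda\}|\le t\}$, and $f^{**}(t)=\frac1t\int_0^t f^*(s)\,ds$. A function $\varphi\colon[0,R)\to[0,\infty)$ is quasiconcave if $\varphi(t)=0$ iff $t=0$, $\varphi$ is non-decreasing, and $\varphi(t)/t$ is non-increasing on $(0,R)$. It satisfies the $B$-condition if there is $C>0$ with $\frac1t\int_0^t \frac{ds}{\varphi(s)}\le \frac{C}{\varphi(t)}$ for all $t\in(0,R)$. $S_\varphi f(t)=\frac{1}{\varphi(t)}\sup_{0<s<t}\varphi(s)f^*(s)$, $t\in(0,R)$. $M_\varphi(0,R)$ is the set of $f$ with $\|f\|_{M_\varphi}=\sup_{0<s<R}\varphi(s)f^{**}(s)<\infty$. *)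

theory Defs
  imports "HOL-Analysis.Analysis"
begin

definition ivl :: "ereal \<Rightarrow> real set" where
  "ivl R = {x. 0 < x \<and> ereal x < R}"

text \<open>Functions are represented by their absolute values, as maps into [0,\<infinity>].
  A measurable a.e. finite function on (0,R):\<close>
definition meas_ae_finite :: "ereal \<Rightarrow> (real \<Rightarrow> ennreal) \<Rightarrow> bool" where
  "meas_ae_finite R f \<longleftrightarrow>
     f \<in> borel_measurable (restrict_space lebesgue (ivl R)) \<and>
     (AE x in lebesgue. x \<in> ivl R \<longrightarrow> f x < \<infinity>)"

definition fstar :: "ereal \<Rightarrow> (real \<Rightarrow> ennreal) \<Rightarrow> real \<Rightarrow> ennreal" where
  "fstar R f t = Inf (ennreal ` {c::real. 0 < c \<and>
       emeasure lebesgue {x \<in> ivl R. ennreal c < f x} \<le> ennreal t})"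

definition fstarstar :: "ereal \<Rightarrow> (real \<Rightarrow> ennreal) \<Rightarrow> real \<Rightarrow> ennreal" where
  "fstarstar R f t = ennreal (1 / t) * (\<integral>\<^sup>+ s \<in> {0<..<t}. fstar R f s \<partial>lborel)"

definition quasiconcave :: "ereal \<Rightarrow> (real \<Rightarrow> real) \<Rightarrow> bool" where
  "quasiconcave R \<phi> \<longleftrightarrow>
     (\<forall>t. 0 \<le> t \<and> ereal t < R \<longrightarrow> 0 \<le> \<phi> t \<and> (\<phi> t = 0 \<longleftrightarrow> t = 0)) \<and>
     (\<forall>s t. 0 \<le> s \<and> s \<le> t \<and> ereal t < R \<longrightarrow> \<phi> s \<le> \<phi> t) \<and>
     (\<forall>s t. 0 < s \<and> s \<le> t \<and> ereal t < R \<longrightarrow> \<phi> t / t \<le> \<phi> s / s)"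

definition B_condition :: "ereal \<Rightarrow> (real \<Rightarrow> real) \<Rightarrow> bool" where
  "B_condition R \<phi> \<longleftrightarrow> (\<exists>C>0. \<forall>t \<in> ivl R.
     ennreal (1 / t) * (\<integral>\<^sup>+ s \<in> {0<..<t}. ennreal (1 / \<phi> s) \<partial>lborel)
       \<le> ennreal (C / \<phi> t))"

definition S_op :: "ereal \<Rightarrow> (real \<Rightarrow> real) \<Rightarrow> (real \<Rightarrow> ennreal) \<Rightarrow> real \<Rightarrow> ennreal" where
  "S_op R \<phi> f t = ennreal (1 / \<phi> t) * (SUP s \<in> {0<..<t}. ennreal (\<phi> s) * fstar R f s)"

definition M_norm :: "ereal \<Rightarrow> (real \<Rightarrow> real) \<Rightarrow> (real \<Rightarrow> ennreal) \<Rightarrow> ennreal" where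
  "M_norm R \<phi> f = (SUP s \<in> ivl R. ennreal (\<phi> s) * fstarstar R f s)"

definition M_space :: "ereal \<Rightarrow> (real \<Rightarrow> real) \<Rightarrow> (real \<Rightarrow> ennreal) set" where
  "M_space R \<phi> = {f. meas_ae_finite R f \<and> M_norm R \<phi> f < \<infinity>}"

definition Linf_norm :: "ereal \<Rightarrow> (real \<Rightarrow> ennreal) \<Rightarrow> ennreal" where
  "Linf_norm R f = Inf {c. AE x in lebesgue. x \<in> ivl R \<longrightarrow> f x \<le> c}"

definition Linf_space :: "ereal \<Rightarrow> (real \<Rightarrow> ennreal) set" where
  "Linf_space R = {f. meas_ae_finite R f \<and> Linf_norm R f < \<infinity>}"

definition bounded_op ::
  "((real \<Rightarrow> ennreal) \<Rightarrow> (real \<Rightarrow> ennreal)) \<Rightarrow> (real \<Rightarrow> ennreal) set \<Rightarrow> ((real \<Rightarrow> ennreal) \<Rightarrow> ennreal)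
   \<Rightarrow> (real \<Rightarrow> ennreal) set \<Rightarrow> ((real \<Rightarrow> ennreal) \<Rightarrow> ennreal) \<Rightarrow> bool" where
  "bounded_op T X nX Y nY \<longleftrightarrow>
     (\<exists>C::real. 0 \<le> C \<and> (\<forall>f \<in> X. T f \<in> Y \<and> nY (T f) \<le> ennreal C * nX f))"

end

theory Submission imports Defs begin

lemma qc_pos: "quasiconcave R \<phi> \<Longrightarrow> t \<in> ivl R \<Longrightarrow> 0 < \<phi> t"
  unfolding quasiconcave_def ivl_def
  by (metis less_eq_real_def mem_Collect_eq order_less_irrefl)

lemma qc_mono: "quasiconcave R \<phi> \<Longrightarrow> 0 \<le> s \<Longrightarrow> s \<le> t \<Longrightarrow> t \<in> ivl R \<Longrightarrow> \<phi> s \<le> \<phi> t"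
  unfolding quasiconcave_def ivl_def by auto

lemma qc_ratio: "quasiconcave R \<phi> \<Longrightarrow> 0 < s \<Longrightarrow> s \<le> t \<Longrightarrow> t \<in> ivl R \<Longrightarrow> \<phi> t \<le> (t / s) * \<phi> s"
proof -
  assume q: "quasiconcave R \<phi>" and s: "0 < s" "s \<le> t" "t \<in> ivl R"
  then have "\<phi> t / t \<le> \<phi> s / s" unfolding quasiconcave_def ivl_def by auto
  moreover have "t > 0" using s by auto
  ultimately show ?thesis using s by (simp add: field_simps)
qed

lemma ivl_is_interval: "is_interval (ivl R)"
  unfolding is_interval_1 ivl_def
  by (auto intro: le_less_trans[of _ "ereal _"])

lemma ivl_borel[measurable]: "ivl R \<in> sets borel"
  by (rule real_interval_borel_measurable[OF ivl_is_interval])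

lemma ivl_lebesgue[measurable]: "ivl R \<in> sets lebesgue"
  using ivl_borel by simp

lemma ivl_sub: "t \<in> ivl R \<Longrightarrow> 0 < s \<Longrightarrow> s \<le> t \<Longrightarrow> s \<in> ivl R"
  unfolding ivl_def by (auto intro: le_less_trans[of _ "ereal _"])

lemma mono_ennreal_borel:
  fixes G :: "real \<Rightarrow> ennreal"
  assumes "mono G"
  shows "G \<in> borel_measurable borel"
proof (rule borel_measurableI_greater)
  fix y
  have "is_interval {x. y < G x}"
    unfolding is_interval_1 using assms
    by (auto simp: mono_def intro: less_le_trans)
  then show "{x \<in> space borel. y < G x} \<in> sets borel"
    using real_interval_borel_measurable by simp
qed

lemma qc_mono_on: "quasiconcave R \<phi> \<Longrightarrow> mono_on (ivl R) \<phi>"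
  unfolding mono_on_def using qc_mono by (metis ivl_def less_eq_real_def mem_Collect_eq)

lemma phi_meas: "quasiconcave R \<phi> \<Longrightarrow> \<phi> \<in> borel_measurable (restrict_space borel (ivl R))"
  by (rule borel_measurable_mono_on_fnc[OF qc_mono_on])

lemma inv_phi_meas:
  assumes "quasiconcave R \<phi>" "A \<subseteq> ivl R" "A \<in> sets borel"
  shows "(\<lambda>x. ennreal (1 / \<phi> x) * indicator A x) \<in> borel_measurable borel"
proof -
  note [measurable] = phi_meas[OF assms(1)]
  have "(\<lambda>x. ennreal (1 / \<phi> x)) \<in> borel_measurable (restrict_space borel (ivl R))"
    by measurable
  then have m: "(\<lambda>x. ennreal (1 / \<phi> x) * indicator (ivl R) x) \<in> borel_measurable borel"
    by (subst (asm) borel_measurable_restrict_space_iff_ennreal) auto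
  have "(\<lambda>x. ennreal (1 / \<phi> x) * indicator (ivl R) x * indicator A x) \<in> borel_measurable borel"
    using m assms(3) by measurable
  moreover have "(\<lambda>x. ennreal (1 / \<phi> x) * indicator (ivl R) x * indicator A x) = (\<lambda>x. ennreal (1 / \<phi> x) * indicator A x)"
    using assms(2) by (intro ext) (auto split: split_indicator)
  ultimately show ?thesis by simp
qed

lemma Sop_meas:
  assumes "quasiconcave R \<phi>"
  shows "S_op R \<phi> f \<in> borel_measurable (restrict_space lebesgue (ivl R))"
proof -
  note [measurable] = phi_meas[OF assms(1)]
  define G where "G t = (SUP s \<in> {0<..<t}. ennreal (\<phi> s) * fstar R f s)" for t
  have "mono G" unfolding G_def mono_def by (auto intro!: SUP_subset_mono)
  then have "G \<in> borel_measurable borel" by (rule mono_ennreal_borel)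
  then have [measurable]: "G \<in> borel_measurable (restrict_space borel (ivl R))"
    by (rule measurable_restrict_space1)
  have "(\<lambda>t. ennreal (1 / \<phi> t) * G t) \<in> borel_measurable (restrict_space borel (ivl R))"
    by measurable
  then have "S_op R \<phi> f \<in> borel_measurable (restrict_space borel (ivl R))"
    unfolding S_op_def G_def[symmetric] by simp
  then show ?thesis
    by (rule borel_measurable_subalgebra[rotated 2])
       (auto simp: sets_restrict_space intro!: mono_restrict_space)
qed

lemma fstar_le_c:
  assumes "0 < c" "emeasure lebesgue {x \<in> ivl R. ennreal c < f x} \<le> ennreal t"
  shows "fstar R f t \<le> ennreal c"
  unfolding fstar_def using assms by (intro Inf_lower) auto

lemma le_fstar:
  assumes "\<And>c. 0 < c \<Longrightarrow> emeasure lebesgue {x \<in> ivl R. ennreal c < f x} \<le> ennreal t \<Longrightarrow> v \<le> ennreal c"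
  shows "v \<le> fstar R f t"
  unfolding fstar_def using assms by (intro Inf_greatest) auto

lemma fstar_anti:
  assumes "0 \<le> s" "s \<le> t"
  shows "fstar R f t \<le> fstar R f s"
  unfolding fstar_def using assms
  by (intro Inf_superset_mono image_mono) (auto intro: order_trans)

lemma fstar_le_fstarstar:
  assumes "0 < s"
  shows "fstar R f s \<le> fstarstar R f s"
proof -
  have "(\<integral>\<^sup>+ x \<in> {0<..<s}. fstar R f s \<partial>lborel) \<le> (\<integral>\<^sup>+ x \<in> {0<..<s}. fstar R f x \<partial>lborel)"
    by (intro nn_integral_mono) (auto split: split_indicator intro: fstar_anti)
  moreover have "(\<integral>\<^sup>+ x \<in> {0<..<s}. fstar R f s \<partial>lborel) = fstar R f s * ennreal s"
    using assms by (subst nn_integral_cmult_indicator) auto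
  ultimately have "ennreal (1/s) * (fstar R f s * ennreal s) \<le> fstarstar R f s"
    unfolding fstarstar_def by (intro mult_left_mono) auto
  moreover have "ennreal (1/s) * (fstar R f s * ennreal s) = fstar R f s"
  proof -
    have e0: "ennreal (1/s) * ennreal s = ennreal (1/s * s)"
      by (rule ennreal_mult[symmetric]) (use assms in auto)
    have "1/s * s = 1" using assms by simp
    then have e1: "ennreal (1/s) * ennreal s = 1" using e0 by simp
    have "ennreal (1/s) * (fstar R f s * ennreal s) = (ennreal (1/s) * ennreal s) * fstar R f s"
      by (simp only: mult.assoc mult.commute[of "fstar R f s"])
    then show ?thesis using e1 by (simp only: mult_1)
  qed
  ultimately show ?thesis by (metis)
qed

lemma Sop_le_M:
  assumes q: "quasiconcave R \<phi>" and t: "t \<in> ivl R"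
  shows "S_op R \<phi> f t \<le> ennreal (1 / \<phi> t) * M_norm R \<phi> f"
  unfolding S_op_def
proof (intro mult_left_mono SUP_least)
  fix s assume s: "s \<in> {0<..<t}"
  then have si: "s \<in> ivl R" using ivl_sub[OF t] by auto
  have "ennreal (\<phi> s) * fstar R f s \<le> ennreal (\<phi> s) * fstarstar R f s"
    using s by (intro mult_left_mono fstar_le_fstarstar) auto
  also have "\<dots> \<le> M_norm R \<phi> f" unfolding M_norm_def using si by (intro SUP_upper)
  finally show "ennreal (\<phi> s) * fstar R f s \<le> M_norm R \<phi> f" .
qed auto

lemma fstar_le_div:
  assumes q: "quasiconcave R \<phi>" and s: "s \<in> ivl R"
    and h: "\<And>x. x \<in> ivl R \<Longrightarrow> h x \<le> ennreal k * ennreal (1 / \<phi> x)" and k: "0 \<le> k"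
  shows "fstar R h s \<le> ennreal k * ennreal (1 / \<phi> s)"
proof (rule ennreal_le_epsilon)
  fix e :: real assume e: "0 < e"
  have ps: "0 < \<phi> s" using qc_pos[OF q s] .
  define c where "c = k / \<phi> s + e"
  have "0 \<le> k / \<phi> s" using ps k by simp
  then have c: "0 < c" unfolding c_def using e by linarith
  have "{x \<in> ivl R. ennreal c < h x} \<subseteq> {0<..<s}"
  proof
    fix x assume x: "x \<in> {x \<in> ivl R. ennreal c < h x}"
    have "x < s"
    proof (rule ccontr)
      assume "\<not> x < s"
      then have "\<phi> s \<le> \<phi> x" using qc_mono[OF q, of s x] x s unfolding ivl_def by auto
      then have "k * (1 / \<phi> x) \<le> k / \<phi> s" using ps k
        by (simp add: divide_left_mono)
      also have "\<dots> < c" unfolding c_def using e by simp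
      finally have lt: "k * (1 / \<phi> x) < c" .
      have px: "0 < \<phi> x" using qc_pos[OF q, of x] x by auto
      have em: "ennreal k * ennreal (1 / \<phi> x) = ennreal (k * (1 / \<phi> x))"
        by (rule ennreal_mult[symmetric]) (use k px in auto)
      have "h x \<le> ennreal k * ennreal (1 / \<phi> x)" using h[of x] x by blast
      also have "\<dots> = ennreal (k * (1 / \<phi> x))" by (rule em)
      also have "\<dots> < ennreal c" using lt c by (intro ennreal_lessI)
      finally have "h x < ennreal c" .
      then show False using x by auto
    qed
    then show "x \<in> {0<..<s}" using x unfolding ivl_def by auto
  qed
  then have "emeasure lebesgue {x \<in> ivl R. ennreal c < h x} \<le> emeasure lebesgue {0<..<s}"
    by (intro emeasure_mono) auto
  also have "\<dots> = ennreal s" using s unfolding ivl_def by simp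
  finally have "fstar R h s \<le> ennreal c" by (rule fstar_le_c[OF c])
  also have "ennreal c = ennreal k * ennreal (1 / \<phi> s) + ennreal e"
  proof -
    have "ennreal c = ennreal (k / \<phi> s) + ennreal e"
      unfolding c_def by (rule ennreal_plus) (use \<open>0 \<le> k / \<phi> s\<close> e in auto)
    moreover have "ennreal (k / \<phi> s) = ennreal k * ennreal (1 / \<phi> s)"
    proof -
      have kk: "k / \<phi> s = k * (1 / \<phi> s)" by simp
      have "ennreal (k * (1 / \<phi> s)) = ennreal k * ennreal (1 / \<phi> s)"
        by (rule ennreal_mult) (use k ps in auto)
      then show ?thesis by (simp only: kk)
    qed
    ultimately show ?thesis by (simp only:)
  qed
  finally show "fstar R h s \<le> ennreal k * ennreal (1 / \<phi> s) + ennreal e" .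
qed



lemma inv_cancel: "0 < p \<Longrightarrow> ennreal (1/p) * (ennreal p * X) = X"
proof -
  assume p: "0 < p"
  have e0: "ennreal (1/p) * ennreal p = ennreal (1/p * p)"
    by (rule ennreal_mult[symmetric]) (use p in auto)
  have "1/p * p = 1" using p by simp
  then have e1: "ennreal (1/p) * ennreal p = 1" using e0 by simp
  have "ennreal (1/p) * (ennreal p * X) = (ennreal (1/p) * ennreal p) * X"
    by (simp only: mult.assoc)
  then show ?thesis using e1 by (simp only: mult_1)
qed

lemma mul_div_cancel: "0 < p \<Longrightarrow> 0 \<le> C \<Longrightarrow> ennreal p * ennreal (C / p) = ennreal C"
proof -
  assume p: "0 < p" and C: "0 \<le> C"
  have "ennreal p * ennreal (C / p) = ennreal (p * (C / p))"
    by (rule ennreal_mult[symmetric]) (use p C in auto)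
  moreover have "p * (C / p) = C" using p by simp
  ultimately show ?thesis by simp
qed

lemma fstar_le_Linf:
  assumes L: "Linf_norm R f < \<infinity>"
  shows "fstar R f s \<le> Linf_norm R f"
proof (rule ennreal_le_epsilon)
  fix e :: real assume e: "0 < e"
  obtain l where l: "Linf_norm R f = ennreal l" "0 \<le> l" using L by (cases "Linf_norm R f") auto
  define c where "c = l + e"
  have c: "0 < c" using l e unfolding c_def by linarith
  have "Linf_norm R f < ennreal c" unfolding l c_def using e l by (intro ennreal_lessI) auto
  then obtain d where d: "AE x in lebesgue. x \<in> ivl R \<longrightarrow> f x \<le> d" "d < ennreal c"
    unfolding Linf_norm_def by (auto simp: Inf_less_iff)
  then obtain N where N: "{x \<in> space lebesgue. \<not> (x \<in> ivl R \<longrightarrow> f x \<le> d)} \<subseteq> N"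
    "emeasure lebesgue N = 0" "N \<in> sets lebesgue"
    by (auto elim!: AE_E)
  have "{x \<in> ivl R. ennreal c < f x} \<subseteq> N"
    using N(1) d(2) by (auto simp: not_le intro: less_trans)
  then have "emeasure lebesgue {x \<in> ivl R. ennreal c < f x} \<le> emeasure lebesgue N"
    using N(3) by (intro emeasure_mono)
  then have "emeasure lebesgue {x \<in> ivl R. ennreal c < f x} \<le> ennreal s" using N(2) by simp
  then have "fstar R f s \<le> ennreal c" by (rule fstar_le_c[OF c])
  also have "ennreal c = Linf_norm R f + ennreal e"
    unfolding c_def l(1) by (rule ennreal_plus) (use l e in auto)
  finally show "fstar R f s \<le> Linf_norm R f + ennreal e" .
qed

lemma Sop_le_Linf:
  assumes q: "quasiconcave R \<phi>" and t: "t \<in> ivl R" and L: "Linf_norm R f < \<infinity>"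
  shows "S_op R \<phi> f t \<le> Linf_norm R f"
proof -
  have pt: "0 < \<phi> t" using qc_pos[OF q t] .
  have "(SUP s \<in> {0<..<t}. ennreal (\<phi> s) * fstar R f s) \<le> ennreal (\<phi> t) * Linf_norm R f"
  proof (rule SUP_least)
    fix s assume s: "s \<in> {0<..<t}"
    have "\<phi> s \<le> \<phi> t" using qc_mono[OF q, of s t] s t by auto
    then show "ennreal (\<phi> s) * fstar R f s \<le> ennreal (\<phi> t) * Linf_norm R f"
      by (intro mult_mono fstar_le_Linf[OF L] ennreal_leI) auto
  qed
  then have "S_op R \<phi> f t \<le> ennreal (1 / \<phi> t) * (ennreal (\<phi> t) * Linf_norm R f)"
    unfolding S_op_def by (rule mult_left_mono) simp
  also have "\<dots> = Linf_norm R f" by (rule inv_cancel[OF pt])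
  finally show ?thesis .
qed

lemma part2:
  assumes q: "quasiconcave R \<phi>"
  shows "bounded_op (S_op R \<phi>) (Linf_space R) (Linf_norm R) (Linf_space R) (Linf_norm R)"
  unfolding bounded_op_def
proof (intro exI[of _ 1] conjI ballI)
  fix f assume f: "f \<in> Linf_space R"
  then have L: "Linf_norm R f < \<infinity>" unfolding Linf_space_def by auto
  have le: "\<And>x. x \<in> ivl R \<Longrightarrow> S_op R \<phi> f x \<le> Linf_norm R f"
    by (rule Sop_le_Linf[OF q _ L])
  have N: "Linf_norm R (S_op R \<phi> f) \<le> Linf_norm R f"
    unfolding Linf_norm_def[of R "S_op R \<phi> f"] using le by (intro Inf_lower AE_I2) auto
  show "Linf_norm R (S_op R \<phi> f) \<le> ennreal 1 * Linf_norm R f" using N by simp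
  have "meas_ae_finite R (S_op R \<phi> f)"
    unfolding meas_ae_finite_def using Sop_meas[OF q] le L
    by (auto intro!: AE_I2 intro: le_less_trans)
  then show "S_op R \<phi> f \<in> Linf_space R" unfolding Linf_space_def using N L by (auto intro: le_less_trans)
qed simp

lemma part1a:
  assumes q: "quasiconcave R \<phi>" and B: "B_condition R \<phi>"
  shows "bounded_op (S_op R \<phi>) (M_space R \<phi>) (M_norm R \<phi>) (M_space R \<phi>) (M_norm R \<phi>)"
proof -
  obtain C where C: "C > 0" and CB: "\<And>t. t \<in> ivl R \<Longrightarrow>
     ennreal (1 / t) * (\<integral>\<^sup>+ s \<in> {0<..<t}. ennreal (1 / \<phi> s) \<partial>lborel) \<le> ennreal (C / \<phi> t)"
    using B unfolding B_condition_def by auto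
  show ?thesis unfolding bounded_op_def
  proof (intro exI[of _ C] conjI ballI)
    show "0 \<le> C" using C by simp
    fix f assume f: "f \<in> M_space R \<phi>"
    then have K: "M_norm R \<phi> f < \<infinity>" unfolding M_space_def by auto
    obtain k where k: "M_norm R \<phi> f = ennreal k" "0 \<le> k" using K by (cases "M_norm R \<phi> f") auto
    have le: "S_op R \<phi> f x \<le> ennreal k * ennreal (1 / \<phi> x)" if x: "x \<in> ivl R" for x
      using Sop_le_M[OF q x, of f] unfolding k(1) by (simp only: mult.commute)
    have N: "M_norm R \<phi> (S_op R \<phi> f) \<le> ennreal C * M_norm R \<phi> f"
      unfolding M_norm_def[of R \<phi> "S_op R \<phi> f"]
    proof (rule SUP_least)
      fix t assume t: "t \<in> ivl R"
      have pt: "0 < \<phi> t" using qc_pos[OF q t] .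
      have sub: "{0<..<t} \<subseteq> ivl R" using ivl_sub[OF t] by auto
      have "(\<integral>\<^sup>+ s \<in> {0<..<t}. fstar R (S_op R \<phi> f) s \<partial>lborel)
          \<le> (\<integral>\<^sup>+ s. ennreal k * (ennreal (1 / \<phi> s) * indicator {0<..<t} s) \<partial>lborel)"
      proof (intro nn_integral_mono)
        fix s
        show "fstar R (S_op R \<phi> f) s * indicator {0<..<t} s
              \<le> ennreal k * (ennreal (1 / \<phi> s) * indicator {0<..<t} s)"
        proof (cases "s \<in> {0<..<t}")
          case True
          then have "s \<in> ivl R" using sub by auto
          then have "fstar R (S_op R \<phi> f) s \<le> ennreal k * ennreal (1 / \<phi> s)"
            by (intro fstar_le_div[OF q _ le k(2)])
          then show ?thesis using True by (simp add: mult.assoc)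
        qed simp
      qed
      also have "\<dots> = ennreal k * (\<integral>\<^sup>+ s \<in> {0<..<t}. ennreal (1 / \<phi> s) \<partial>lborel)"
        by (rule nn_integral_cmult) (use inv_phi_meas[OF q sub] in simp)
      finally have I: "(\<integral>\<^sup>+ s \<in> {0<..<t}. fstar R (S_op R \<phi> f) s \<partial>lborel)
          \<le> ennreal k * (\<integral>\<^sup>+ s \<in> {0<..<t}. ennreal (1 / \<phi> s) \<partial>lborel)" .
      have "ennreal (\<phi> t) * fstarstar R (S_op R \<phi> f) t
          \<le> ennreal (\<phi> t) * (ennreal (1 / t) * (ennreal k * (\<integral>\<^sup>+ s \<in> {0<..<t}. ennreal (1 / \<phi> s) \<partial>lborel)))"
        unfolding fstarstar_def by (intro mult_left_mono I) auto
      also have "\<dots> = ennreal k * (ennreal (\<phi> t) * (ennreal (1 / t) * (\<integral>\<^sup>+ s \<in> {0<..<t}. ennreal (1 / \<phi> s) \<partial>lborel)))"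
        by (simp only: mult.assoc mult.left_commute[of "ennreal k"])
      also have "\<dots> \<le> ennreal k * (ennreal (\<phi> t) * ennreal (C / \<phi> t))"
        by (intro mult_left_mono CB[OF t]) auto
      also have "\<dots> = ennreal C * M_norm R \<phi> f"
        unfolding mul_div_cancel[OF pt less_imp_le[OF C]] k(1) by (simp only: mult.commute)
      finally show "ennreal (\<phi> t) * fstarstar R (S_op R \<phi> f) t \<le> ennreal C * M_norm R \<phi> f" .
    qed
    then show "M_norm R \<phi> (S_op R \<phi> f) \<le> ennreal C * M_norm R \<phi> f" .
    have fin: "S_op R \<phi> f x < \<infinity>" if "x \<in> ivl R" for x
      using le[OF that] by (rule le_less_trans) (simp add: ennreal_mult_less_top)
    have "meas_ae_finite R (S_op R \<phi> f)"
      unfolding meas_ae_finite_def using Sop_meas[OF q] fin by (auto intro!: AE_I2)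
    moreover have "M_norm R \<phi> (S_op R \<phi> f) < \<infinity>"
      using N by (rule le_less_trans) (use K in \<open>simp add: ennreal_mult_less_top\<close>)
    ultimately show "S_op R \<phi> f \<in> M_space R \<phi>" unfolding M_space_def by auto
  qed
qed



lemma em2: "0 \<le> x \<Longrightarrow> 0 \<le> y \<Longrightarrow> ennreal x * ennreal y = ennreal (x*y)"
  by (rule ennreal_mult[symmetric]) auto

lemma em3: "0 < x \<Longrightarrow> 0 < y \<Longrightarrow> 0 < z \<Longrightarrow> ennreal x * (ennreal y * ennreal z) = ennreal (x*(y*z))"
proof -
  assume "0 < x" "0 < y" "0 < z"
  then have "ennreal y * ennreal z = ennreal (y*z)" "ennreal x * ennreal (y*z) = ennreal (x*(y*z))"
    by (auto intro!: em2)
  then show ?thesis by simp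
qed

definition ind :: "real \<Rightarrow> real \<Rightarrow> ennreal" where
  "ind a x = indicator {0<..<a} x"

lemma ind_fstar_le1: "fstar R (ind a) s \<le> 1"
proof -
  have e: "{x \<in> ivl R. ennreal 1 < ind a x} = {}" unfolding ind_def by (auto split: split_indicator)
  have "emeasure lebesgue {x \<in> ivl R. ennreal 1 < ind a x} \<le> ennreal s" unfolding e by simp
  then have "fstar R (ind a) s \<le> ennreal 1" by (intro fstar_le_c) auto
  then show ?thesis by simp
qed

lemma ind_fstar_0: assumes "0 < a" "a \<le> s" shows "fstar R (ind a) s \<le> 0"
proof (rule ennreal_le_epsilon)
  fix e :: real assume e: "0 < e"
  have "{x \<in> ivl R. ennreal e < ind a x} \<subseteq> {0<..<a}" unfolding ind_def by (auto split: split_indicator)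
  then have "emeasure lebesgue {x \<in> ivl R. ennreal e < ind a x} \<le> emeasure lebesgue {0<..<a}"
    by (intro emeasure_mono) auto
  also have "\<dots> \<le> ennreal s" using assms by simp
  finally have "fstar R (ind a) s \<le> ennreal e" by (rule fstar_le_c[OF e])
  then show "fstar R (ind a) s \<le> 0 + ennreal e" by simp
qed

lemma ind_fstar_1: assumes a: "a \<in> ivl R" and s: "0 \<le> s" "s < a" shows "1 \<le> fstar R (ind a) s"
proof (rule le_fstar)
  fix c :: real assume c: "0 < c" and m: "emeasure lebesgue {x \<in> ivl R. ennreal c < ind a x} \<le> ennreal s"
  show "1 \<le> ennreal c"
  proof (rule ccontr)
    assume "\<not> 1 \<le> ennreal c"
    then have c1: "c < 1" by (simp add: not_le)
    have "{0<..<a} \<subseteq> {x \<in> ivl R. ennreal c < ind a x}"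
      using c1 ivl_sub[OF a] unfolding ind_def by auto
    then have "emeasure lebesgue {0<..<a} \<le> emeasure lebesgue {x \<in> ivl R. ennreal c < ind a x}"
      unfolding ind_def by (intro emeasure_mono) auto
    also note m
    finally have "ennreal a \<le> ennreal s" using a unfolding ivl_def by simp
    then show False using s by simp
  qed
qed

lemma ind_M:
  assumes q: "quasiconcave R \<phi>" and a: "a \<in> ivl R"
  shows "ind a \<in> M_space R \<phi>" "M_norm R \<phi> (ind a) \<le> ennreal (\<phi> a)"
proof -
  have a0: "0 < a" using a unfolding ivl_def by auto
  show N: "M_norm R \<phi> (ind a) \<le> ennreal (\<phi> a)"
    unfolding M_norm_def
  proof (rule SUP_least)
    fix t assume t: "t \<in> ivl R"
    have t0: "0 < t" using t unfolding ivl_def by auto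
    have pt: "0 < \<phi> t" using qc_pos[OF q t] .
    show "ennreal (\<phi> t) * fstarstar R (ind a) t \<le> ennreal (\<phi> a)"
    proof (cases "t \<le> a")
      case True
      have "(\<integral>\<^sup>+ s \<in> {0<..<t}. fstar R (ind a) s \<partial>lborel) \<le> (\<integral>\<^sup>+ s \<in> {0<..<t}. 1 \<partial>lborel)"
        by (intro nn_integral_mono) (auto split: split_indicator intro: ind_fstar_le1)
      also have "\<dots> = ennreal t" using t0 by (subst nn_integral_cmult_indicator) auto
      finally have "fstarstar R (ind a) t \<le> ennreal (1/t) * ennreal t"
        unfolding fstarstar_def by (rule mult_left_mono) simp
      also have "\<dots> = 1" using inv_cancel[OF t0, of 1] by simp
      finally have "ennreal (\<phi> t) * fstarstar R (ind a) t \<le> ennreal (\<phi> t) * 1"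
        by (rule mult_left_mono) simp
      also have "\<dots> \<le> ennreal (\<phi> a)" using qc_mono[OF q, of t a] True t0 a by (simp add: ennreal_leI)
      finally show ?thesis .
    next
      case False
      have "(\<integral>\<^sup>+ s \<in> {0<..<t}. fstar R (ind a) s \<partial>lborel) \<le> (\<integral>\<^sup>+ s \<in> {0<..<a}. 1 \<partial>lborel)"
      proof (intro nn_integral_mono)
        fix s
        show "fstar R (ind a) s * indicator {0<..<t} s \<le> 1 * indicator {0<..<a} s"
        proof (cases "s \<in> {0<..<a}")
          case True then show ?thesis using ind_fstar_le1[of R a s] by (auto split: split_indicator)
        next
          case F: False
          show ?thesis
          proof (cases "s \<in> {0<..<t}")
            case True
            then have "a \<le> s" using F by auto
            then have "fstar R (ind a) s \<le> 0" using ind_fstar_0 a0 by blast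
            then show ?thesis by simp
          qed simp
        qed
      qed
      also have "\<dots> = ennreal a" using a0 by (subst nn_integral_cmult_indicator) auto
      finally have "fstarstar R (ind a) t \<le> ennreal (1/t) * ennreal a"
        unfolding fstarstar_def by (rule mult_left_mono) simp
      then have "ennreal (\<phi> t) * fstarstar R (ind a) t \<le> ennreal (\<phi> t) * (ennreal (1/t) * ennreal a)"
        by (rule mult_left_mono) simp
      also have "\<dots> = ennreal (\<phi> t * (1/t * a))"
        by (rule em3) (use pt t0 a0 in auto)
      also have "\<dots> \<le> ennreal (\<phi> a)"
      proof (rule ennreal_leI)
        have "\<phi> t \<le> (t / a) * \<phi> a" using qc_ratio[OF q a0 _ t] False by simp
        then have "\<phi> t * a \<le> t * \<phi> a" using a0 by (simp add: field_simps)
        then show "\<phi> t * (1/t * a) \<le> \<phi> a" using t0 by (simp add: field_simps)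
      qed
      finally show ?thesis .
    qed
  qed
  have "ind a \<in> borel_measurable lborel" unfolding ind_def by measurable
  then have "ind a \<in> borel_measurable lebesgue"
    by (rule measurable_completion)
  then have "ind a \<in> borel_measurable (restrict_space lebesgue (ivl R))"
    by (intro measurable_restrict_space1)
  moreover have "AE x in lebesgue. x \<in> ivl R \<longrightarrow> ind a x < \<infinity>"
    unfolding ind_def by (intro AE_I2) (auto split: split_indicator)
  ultimately show "ind a \<in> M_space R \<phi>"
    unfolding M_space_def meas_ae_finite_def using N by (auto intro: le_less_trans)
qed



lemma Sind_lower:
  assumes q: "quasiconcave R \<phi>" and a: "a \<in> ivl R" and x: "x \<in> ivl R"
    and b: "0 < b" "b < x" "b < a"
  shows "ennreal (\<phi> b / \<phi> x) \<le> S_op R \<phi> (ind a) x"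
proof -
  have px: "0 < \<phi> x" using qc_pos[OF q x] .
  have bi: "b \<in> ivl R" using ivl_sub[OF x b(1)] b by auto
  have pb: "0 < \<phi> b" using qc_pos[OF q bi] .
  have "ennreal (\<phi> b) * 1 \<le> ennreal (\<phi> b) * fstar R (ind a) b"
    using ind_fstar_1[OF a, of b] b by (intro mult_left_mono) auto
  also have "\<dots> \<le> (SUP s \<in> {0<..<x}. ennreal (\<phi> s) * fstar R (ind a) s)"
    using b by (intro SUP_upper) auto
  finally have "ennreal (1 / \<phi> x) * ennreal (\<phi> b) \<le> S_op R \<phi> (ind a) x"
    unfolding S_op_def by (intro mult_left_mono) auto
  moreover have "ennreal (1 / \<phi> x) * ennreal (\<phi> b) = ennreal (\<phi> b / \<phi> x)"
    using em2[of "1 / \<phi> x" "\<phi> b"] px pb by simp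
  ultimately show ?thesis by simp
qed

lemma Sind_fstar_lower:
  assumes q: "quasiconcave R \<phi>" and a: "a \<in> ivl R" and s: "s \<in> ivl R" and as: "a < s"
  shows "ennreal (\<phi> a / (4 * \<phi> s)) \<le> fstar R (S_op R \<phi> (ind a)) s"
proof -
  have a0: "0 < a" and s0: "0 < s" using a s unfolding ivl_def by auto
  obtain r0 where r0: "ereal s < ereal r0" "ereal r0 < R" using s ereal_dense2 unfolding ivl_def by blast
  define s' where "s' = min r0 (2 * s)"
  have ss': "s < s'" using r0 s0 unfolding s'_def by auto
  have s'i: "s' \<in> ivl R" using r0 s0 ss' unfolding ivl_def s'_def
    by (auto intro: le_less_trans[of _ "ereal r0"])
  have ps: "0 < \<phi> s" using qc_pos[OF q s] .
  have pa: "0 < \<phi> a" using qc_pos[OF q a] .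
  have pas: "\<phi> a \<le> \<phi> s" using qc_mono[OF q, of a s] as a0 s by auto
  have ps': "\<phi> s' \<le> 2 * \<phi> s"
  proof -
    have "\<phi> s' \<le> (s' / s) * \<phi> s" using qc_ratio[OF q s0 _ s'i] ss' by simp
    also have "\<dots> \<le> 2 * \<phi> s" using ps s0 unfolding s'_def
      by (intro mult_right_mono) (auto simp: field_simps)
    finally show ?thesis .
  qed
  define v where "v = \<phi> a / (4 * \<phi> s)"
  have low: "ennreal v \<le> S_op R \<phi> (ind a) x" if x: "x \<in> {0<..<s'}" for x
  proof -
    have xi: "x \<in> ivl R" using ivl_sub[OF s'i, of x] x by auto
    have px: "0 < \<phi> x" using qc_pos[OF q xi] .
    show ?thesis
    proof (cases "a / 2 < x")
      case True
      have a2: "a/2 \<in> ivl R" using ivl_sub[OF a, of "a/2"] a0 by auto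
      have "\<phi> a \<le> (a / (a/2)) * \<phi> (a/2)" using qc_ratio[OF q _ _ a, of "a/2"] a0 by simp
      then have h1: "\<phi> a \<le> 2 * \<phi> (a/2)" using a0 by simp
      have "\<phi> x \<le> \<phi> s'" using qc_mono[OF q, of x s'] x s'i by auto
      then have h2: "\<phi> x \<le> 2 * \<phi> s" using ps' by simp
      have "\<phi> a * \<phi> x \<le> (2 * \<phi> (a/2)) * (2 * \<phi> s)"
        using h1 h2 pa px by (intro mult_mono) auto
      then have "v \<le> \<phi> (a/2) / \<phi> x" unfolding v_def using ps px
        by (simp add: divide_simps)
      then have "ennreal v \<le> ennreal (\<phi> (a/2) / \<phi> x)" by (rule ennreal_leI)
      also have "\<dots> \<le> S_op R \<phi> (ind a) x"
        by (rule Sind_lower[OF q a xi]) (use a0 True in auto)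
      finally show ?thesis .
    next
      case False
      have "\<phi> x \<le> (x / (x/2)) * \<phi> (x/2)" using qc_ratio[OF q _ _ xi, of "x/2"] x by simp
      then have h1: "\<phi> x \<le> 2 * \<phi> (x/2)" using x by simp
      have "\<phi> a * \<phi> x \<le> \<phi> s * (2 * \<phi> (x/2))"
        using h1 pas pa px by (intro mult_mono) auto
      also have "\<dots> \<le> \<phi> s * (4 * \<phi> (x/2))" using ps h1 px by (intro mult_left_mono) auto
      finally have "v \<le> \<phi> (x/2) / \<phi> x" unfolding v_def using ps px
        by (simp add: divide_simps) (simp add: algebra_simps)
      then have "ennreal v \<le> ennreal (\<phi> (x/2) / \<phi> x)" by (rule ennreal_leI)
      also have "\<dots> \<le> S_op R \<phi> (ind a) x"
        by (rule Sind_lower[OF q a xi]) (use a0 False x in auto)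
      finally show ?thesis .
    qed
  qed
  show ?thesis unfolding v_def[symmetric]
  proof (rule le_fstar)
    fix c :: real assume c: "0 < c"
      and m: "emeasure lebesgue {x \<in> ivl R. ennreal c < S_op R \<phi> (ind a) x} \<le> ennreal s"
    show "ennreal v \<le> ennreal c"
    proof (rule ccontr)
      assume "\<not> ennreal v \<le> ennreal c"
      then have cv: "ennreal c < ennreal v" by (simp add: not_le)
      have sub: "{0<..<s'} \<subseteq> {x \<in> ivl R. ennreal c < S_op R \<phi> (ind a) x}"
        using low cv ivl_sub[OF s'i] by (auto intro: less_le_trans)
      note [measurable] = Sop_meas[OF q, of "ind a"]
      have "{x \<in> space (restrict_space lebesgue (ivl R)). ennreal c < S_op R \<phi> (ind a) x}
            \<in> sets (restrict_space lebesgue (ivl R))" by measurable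
      then have meas: "{x \<in> ivl R. ennreal c < S_op R \<phi> (ind a) x} \<in> sets lebesgue"
        by (subst (asm) sets_restrict_space_iff) auto
      have "emeasure lebesgue {0<..<s'} \<le> emeasure lebesgue {x \<in> ivl R. ennreal c < S_op R \<phi> (ind a) x}"
        using sub meas by (rule emeasure_mono)
      also note m
      finally have "ennreal s' \<le> ennreal s" using ss' s0 by simp
      then show False using ss' s0 by simp
    qed
  qed
qed



lemma ennreal_div_le:
  assumes p: "0 < p" and q: "0 \<le> q" and le: "ennreal p * J \<le> ennreal q"
  shows "J \<le> ennreal (q / p)"
proof -
  have "J = ennreal (1/p) * (ennreal p * J)" by (rule inv_cancel[OF p, symmetric])
  also have "\<dots> \<le> ennreal (1/p) * ennreal q" by (intro mult_left_mono le) auto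
  also have "\<dots> = ennreal (1/p * q)" by (rule em2) (use p q in auto)
  also have "1/p * q = q / p" by simp
  finally show ?thesis .
qed

lemma step_E:
  assumes q: "quasiconcave R \<phi>" and C: "0 \<le> C"
    and H: "\<And>f. f \<in> M_space R \<phi> \<Longrightarrow> S_op R \<phi> f \<in> M_space R \<phi> \<and> M_norm R \<phi> (S_op R \<phi> f) \<le> ennreal C * M_norm R \<phi> f"
    and t: "t \<in> ivl R" and a: "0 < a" "a < t"
  shows "(\<integral>\<^sup>+ s. ennreal (1 / \<phi> s) * indicator {a<..<t} s \<partial>lborel) \<le> ennreal (4 * C * t / \<phi> t)"
proof -
  define J where "J = (\<integral>\<^sup>+ s. ennreal (1 / \<phi> s) * indicator {a<..<t} s \<partial>lborel)"
  have ai: "a \<in> ivl R" using ivl_sub[OF t] a by auto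
  have t0: "0 < t" using a by simp
  have pt: "0 < \<phi> t" using qc_pos[OF q t] .
  have pa: "0 < \<phi> a" using qc_pos[OF q ai] .
  have sub: "{a<..<t} \<subseteq> ivl R" using ivl_sub[OF t] a by auto
  have "(\<integral>\<^sup>+ s. ennreal (\<phi> a / 4) * (ennreal (1 / \<phi> s) * indicator {a<..<t} s) \<partial>lborel)
        \<le> (\<integral>\<^sup>+ s \<in> {0<..<t}. fstar R (S_op R \<phi> (ind a)) s \<partial>lborel)"
  proof (intro nn_integral_mono)
    fix s
    show "ennreal (\<phi> a / 4) * (ennreal (1 / \<phi> s) * indicator {a<..<t} s)
          \<le> fstar R (S_op R \<phi> (ind a)) s * indicator {0<..<t} s"
    proof (cases "s \<in> {a<..<t}")
      case True
      then have si: "s \<in> ivl R" using sub by auto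
      have ps: "0 < \<phi> s" using qc_pos[OF q si] .
      have "ennreal (\<phi> a / 4) * ennreal (1 / \<phi> s) = ennreal (\<phi> a / 4 * (1 / \<phi> s))"
        by (rule em2) (use pa ps in auto)
      also have "\<phi> a / 4 * (1 / \<phi> s) = \<phi> a / (4 * \<phi> s)" by simp
      also have "ennreal (\<phi> a / (4 * \<phi> s)) \<le> fstar R (S_op R \<phi> (ind a)) s"
        by (rule Sind_fstar_lower[OF q ai si]) (use True in auto)
      finally show ?thesis using True a by (simp add: indicator_def)
    qed simp
  qed
  also have "(\<integral>\<^sup>+ s. ennreal (\<phi> a / 4) * (ennreal (1 / \<phi> s) * indicator {a<..<t} s) \<partial>lborel)
     = ennreal (\<phi> a / 4) * J"
    unfolding J_def by (rule nn_integral_cmult) (use inv_phi_meas[OF q sub] in simp)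
  finally have I: "ennreal (\<phi> a / 4) * J \<le> (\<integral>\<^sup>+ s \<in> {0<..<t}. fstar R (S_op R \<phi> (ind a)) s \<partial>lborel)" .
  have "ennreal (\<phi> t) * (ennreal (1/t) * (ennreal (\<phi> a / 4) * J))
        \<le> ennreal (\<phi> t) * fstarstar R (S_op R \<phi> (ind a)) t"
    unfolding fstarstar_def by (intro mult_left_mono I) auto
  also have "\<dots> \<le> M_norm R \<phi> (S_op R \<phi> (ind a))"
    unfolding M_norm_def using t by (intro SUP_upper)
  also have "\<dots> \<le> ennreal C * M_norm R \<phi> (ind a)" using H[OF ind_M(1)[OF q ai]] by simp
  also have "\<dots> \<le> ennreal C * ennreal (\<phi> a)" by (intro mult_left_mono ind_M(2)[OF q ai]) auto
  also have "\<dots> = ennreal (C * \<phi> a)" by (rule em2) (use C pa in auto)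
  finally have L: "ennreal (\<phi> t) * (ennreal (1/t) * (ennreal (\<phi> a / 4) * J)) \<le> ennreal (C * \<phi> a)" .
  have "ennreal (\<phi> t) * (ennreal (1/t) * (ennreal (\<phi> a / 4) * J))
       = (ennreal (\<phi> t) * (ennreal (1/t) * ennreal (\<phi> a / 4))) * J"
    by (simp only: mult.assoc)
  also have "ennreal (\<phi> t) * (ennreal (1/t) * ennreal (\<phi> a / 4)) = ennreal (\<phi> t * (1/t * (\<phi> a / 4)))"
    by (rule em3) (use pt t0 pa in auto)
  finally have "ennreal (\<phi> t * (1/t * (\<phi> a / 4))) * J \<le> ennreal (C * \<phi> a)" using L by simp
  then have "J \<le> ennreal (C * \<phi> a / (\<phi> t * (1/t * (\<phi> a / 4))))"
    by (rule ennreal_div_le[rotated 2]) (use pt t0 pa C in auto)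
  also have "C * \<phi> a / (\<phi> t * (1/t * (\<phi> a / 4))) = 4 * C * t / \<phi> t"
    using pt t0 pa by (simp add: field_simps)
  finally show ?thesis unfolding J_def .
qed

lemma step_F:
  assumes q: "quasiconcave R \<phi>" and t: "t \<in> ivl R"
    and le: "\<And>a. 0 < a \<Longrightarrow> a < t \<Longrightarrow> (\<integral>\<^sup>+ s. ennreal (1 / \<phi> s) * indicator {a<..<t} s \<partial>lborel) \<le> K"
  shows "(\<integral>\<^sup>+ s \<in> {0<..<t}. ennreal (1 / \<phi> s) \<partial>lborel) \<le> K"
proof -
  have t0: "0 < t" using t unfolding ivl_def by auto
  define F where "F n s = ennreal (1 / \<phi> s) * indicator {t / (real n + 2)<..<t} s" for n s
  have lt: "t / (real n + 2) < t" "0 < t / (real n + 2)" for n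
  proof -
    have "t * 1 < t * (real n + 2)" using t0 by (intro mult_strict_left_mono) auto
    then show "t / (real n + 2) < t" by (simp add: field_simps)
    show "0 < t / (real n + 2)" using t0 by simp
  qed
  have inc: "incseq F"
    unfolding incseq_def le_fun_def
  proof (intro allI impI)
    fix m n :: nat and s assume mn: "m \<le> n"
    have "t / (real n + 2) \<le> t / (real m + 2)" using mn t0 by (intro divide_left_mono) auto
    then have "indicator {t / (real m + 2)<..<t} s \<le> (indicator {t / (real n + 2)<..<t} s :: ennreal)"
      by (auto split: split_indicator)
    then show "F m s \<le> F n s" unfolding F_def by (intro mult_left_mono) auto
  qed
  have meas: "F n \<in> borel_measurable lborel" for n
  proof -
    have "{t / (real n + 2)<..<t} \<subseteq> ivl R" using ivl_sub[OF t] lt[of n] by auto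
    then show ?thesis unfolding F_def using inv_phi_meas[OF q] by simp
  qed
  have sup: "(SUP n. F n s) = ennreal (1 / \<phi> s) * indicator {0<..<t} s" for s
  proof (rule antisym)
    show "(SUP n. F n s) \<le> ennreal (1 / \<phi> s) * indicator {0<..<t} s"
    proof (rule SUP_least)
      fix n
      have "indicator {t / (real n + 2)<..<t} s \<le> (indicator {0<..<t} s :: ennreal)"
        using lt[of n] by (auto split: split_indicator)
      then show "F n s \<le> ennreal (1 / \<phi> s) * indicator {0<..<t} s"
        unfolding F_def by (intro mult_left_mono) auto
    qed
    show "ennreal (1 / \<phi> s) * indicator {0<..<t} s \<le> (SUP n. F n s)"
    proof (cases "s \<in> {0<..<t}")
      case True
      then have s0: "0 < s" by auto
      obtain n :: nat where n: "t / s < real n" using reals_Archimedean2 by blast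
      have "t < real n * s" using n s0 by (simp add: field_simps)
      then have "t < (real n + 2) * s" using s0 by (simp add: algebra_simps)
      then have "t / (real n + 2) < s" by (simp add: field_simps)
      then have "F n s = ennreal (1 / \<phi> s) * indicator {0<..<t} s"
        using True unfolding F_def by (simp add: indicator_def)
      moreover have "F n s \<le> (SUP n. F n s)" by (rule SUP_upper) simp
      ultimately show ?thesis by simp
    qed simp
  qed
  have "(\<integral>\<^sup>+ s \<in> {0<..<t}. ennreal (1 / \<phi> s) \<partial>lborel) = (\<integral>\<^sup>+ s. (SUP n. F n s) \<partial>lborel)"
    by (simp only: sup)
  also have "\<dots> = (SUP n. integral\<^sup>N lborel (F n))"
    by (rule nn_integral_monotone_convergence_SUP[OF inc meas])
  also have "\<dots> \<le> K"
  proof (rule SUP_least)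
    fix n show "integral\<^sup>N lborel (F n) \<le> K" unfolding F_def using le lt[of n] by simp
  qed
  finally show ?thesis .
qed

lemma part1b:
  assumes q: "quasiconcave R \<phi>"
    and bd: "bounded_op (S_op R \<phi>) (M_space R \<phi>) (M_norm R \<phi>) (M_space R \<phi>) (M_norm R \<phi>)"
  shows "B_condition R \<phi>"
proof -
  obtain C where C: "0 \<le> C" and H: "\<And>f. f \<in> M_space R \<phi> \<Longrightarrow> S_op R \<phi> f \<in> M_space R \<phi> \<and> M_norm R \<phi> (S_op R \<phi> f) \<le> ennreal C * M_norm R \<phi> f"
    using bd unfolding bounded_op_def by blast
  show ?thesis unfolding B_condition_def
  proof (intro exI[of _ "4 * C + 1"] conjI ballI)
    show "0 < 4 * C + 1" using C by simp
    fix t assume t: "t \<in> ivl R"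
    have t0: "0 < t" using t unfolding ivl_def by auto
    have pt: "0 < \<phi> t" using qc_pos[OF q t] .
    have I: "(\<integral>\<^sup>+ s \<in> {0<..<t}. ennreal (1 / \<phi> s) \<partial>lborel) \<le> ennreal (4 * C * t / \<phi> t)"
      by (rule step_F[OF q t]) (rule step_E[OF q C H t])
    have "ennreal (1 / t) * (\<integral>\<^sup>+ s \<in> {0<..<t}. ennreal (1 / \<phi> s) \<partial>lborel)
          \<le> ennreal (1 / t) * ennreal (4 * C * t / \<phi> t)" by (intro mult_left_mono I) auto
    also have "\<dots> = ennreal (1 / t * (4 * C * t / \<phi> t))" by (rule em2) (use t0 pt C in auto)
    also have "1 / t * (4 * C * t / \<phi> t) = 4 * C / \<phi> t" using t0 by simp
    also have "ennreal (4 * C / \<phi> t) \<le> ennreal ((4 * C + 1) / \<phi> t)"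
      using pt by (intro ennreal_leI divide_right_mono) auto
    finally show "ennreal (1 / t) * (\<integral>\<^sup>+ s \<in> {0<..<t}. ennreal (1 / \<phi> s) \<partial>lborel)
          \<le> ennreal ((4 * C + 1) / \<phi> t)" .
  qed
qed

theorem lemma3p2:
  fixes R :: ereal and \<phi> :: "real \<Rightarrow> real"
  assumes "0 < R" and "quasiconcave R \<phi>"
  shows "(bounded_op (S_op R \<phi>) (M_space R \<phi>) (M_norm R \<phi>) (M_space R \<phi>) (M_norm R \<phi>)
            \<longleftrightarrow> B_condition R \<phi>)
       \<and> bounded_op (S_op R \<phi>) (Linf_space R) (Linf_norm R) (Linf_space R) (Linf_norm R)"
  using part1a[OF assms(2)] part1b[OF assms(2)] part2[OF assms(2)] by blast

end
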